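(* Let $R$ be an arithmetic ring such that $\mathrm{Minspec}(R)$ is compact in the Zariski topology and every finitely generated $R$-module has a pure-composition series with indecomposable cyclic factors. Then $\mathrm{Minspec}(R)$ is finite.
   Context: All rings are commutative with identity. $R$ is arithmetic if $R_P$ is a valuation ring for every maximal ideal $P$. $\mathrm{Minspec}(R)$ is the set of minimal prime ideals of $R$ with the Zariski topology. A pure-composition series of $M$ is a finite chain $\{0\}=M_0\subset\dots\subset M_n=M$ of pure submodules (inclusion stays injective after tensoring with any module). *)

theory Defs
  imports "HOL-Analysis.Analysis" "HOL-Algebra.Algebra"
begin

definition loc_rel :: "('a, 'c) ring_scheme \<Rightarrow> 'a set \<Rightarrow> (('a \<times> 'a) \<times> ('a \<times> 'a)) set" where
  "loc_rel R S = {((a, s), (b, t)). a \<in> carrier R \<and> b \<in> carrier R \<and> s \<in> S \<and> t \<in> S \<and>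
     (\<exists>u\<in>S. u \<otimes>\<^bsub>R\<^esub> ((a \<otimes>\<^bsub>R\<^esub> t) \<ominus>\<^bsub>R\<^esub> (b \<otimes>\<^bsub>R\<^esub> s)) = \<zero>\<^bsub>R\<^esub>)}"

definition loc_class :: "('a, 'c) ring_scheme \<Rightarrow> 'a set \<Rightarrow> 'a \<times> 'a \<Rightarrow> ('a \<times> 'a) set" where
  "loc_class R S p = loc_rel R S `` {p}"

definition localization :: "('a, 'c) ring_scheme \<Rightarrow> 'a set \<Rightarrow> ('a \<times> 'a) set ring" where
  "localization R S =
    \<lparr> carrier = (carrier R \<times> S) // loc_rel R S,
      mult = (\<lambda>U V. let p = (SOME p. p \<in> U); q = (SOME q. q \<in> V) in
          loc_class R S (fst p \<otimes>\<^bsub>R\<^esub> fst q, snd p \<otimes>\<^bsub>R\<^esub> snd q)),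
      one = loc_class R S (\<one>\<^bsub>R\<^esub>, \<one>\<^bsub>R\<^esub>),
      ring.zero = loc_class R S (\<zero>\<^bsub>R\<^esub>, \<one>\<^bsub>R\<^esub>),
      ring.add = (\<lambda>U V. let p = (SOME p. p \<in> U); q = (SOME q. q \<in> V) in
          loc_class R S ((fst p \<otimes>\<^bsub>R\<^esub> snd q) \<oplus>\<^bsub>R\<^esub> (fst q \<otimes>\<^bsub>R\<^esub> snd p), snd p \<otimes>\<^bsub>R\<^esub> snd q)) \<rparr>"

text \<open>Valuation ring in the sense of chain rings (not necessarily domains): nonzero commutative ring
  in which any two elements are comparable under divisibility.\<close>
definition valuation_ring :: "('a, 'c) ring_scheme \<Rightarrow> bool" where
  "valuation_ring A \<longleftrightarrow> cring A \<and> \<one>\<^bsub>A\<^esub> \<noteq> \<zero>\<^bsub>A\<^esub> \<and>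
     (\<forall>a\<in>carrier A. \<forall>b\<in>carrier A.
        (\<exists>c\<in>carrier A. b = a \<otimes>\<^bsub>A\<^esub> c) \<or> (\<exists>c\<in>carrier A. a = b \<otimes>\<^bsub>A\<^esub> c))"

definition arithmetic :: "('a, 'c) ring_scheme \<Rightarrow> bool" where
  "arithmetic R \<longleftrightarrow> cring R \<and>
     (\<forall>P. maximalideal P R \<longrightarrow> valuation_ring (localization R (carrier R - P)))"

definition Minspec :: "('a, 'c) ring_scheme \<Rightarrow> 'a set set" where
  "Minspec R = {P. primeideal P R \<and> (\<forall>Q. primeideal Q R \<and> Q \<subseteq> P \<longrightarrow> Q = P)}"

definition zariski :: "('a, 'c) ring_scheme \<Rightarrow> 'a set topology" where
  "zariski R = topology_generated_by {{P. primeideal P R \<and> a \<notin> P} | a. a \<in> carrier R}"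

definition gen_sub :: "('a, 'c) ring_scheme \<Rightarrow> ('a, 'm, 'd) module_scheme \<Rightarrow> 'm set \<Rightarrow> 'm set" where
  "gen_sub R M S = carrier M \<inter> \<Inter>{N. submodule N R M \<and> S \<subseteq> N}"

definition fin_gen :: "('a, 'c) ring_scheme \<Rightarrow> ('a, 'm, 'd) module_scheme \<Rightarrow> bool" where
  "fin_gen R M \<longleftrightarrow> (\<exists>S. finite S \<and> S \<subseteq> carrier M \<and> gen_sub R M S = carrier M)"

definition cyclic_mod :: "('a, 'c) ring_scheme \<Rightarrow> ('a, 'm, 'd) module_scheme \<Rightarrow> bool" where
  "cyclic_mod R M \<longleftrightarrow> (\<exists>x\<in>carrier M. gen_sub R M {x} = carrier M)"

definition indecomposable :: "('a, 'c) ring_scheme \<Rightarrow> ('a, 'm, 'd) module_scheme \<Rightarrow> bool" where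
  "indecomposable R M \<longleftrightarrow> carrier M \<noteq> {\<zero>\<^bsub>M\<^esub>} \<and>
     (\<forall>A B. submodule A R M \<and> submodule B R M \<and> A \<inter> B = {\<zero>\<^bsub>M\<^esub>} \<and>
            gen_sub R M (A \<union> B) = carrier M \<longrightarrow> A = {\<zero>\<^bsub>M\<^esub>} \<or> B = {\<zero>\<^bsub>M\<^esub>})"

text \<open>Quotient module M/N (cosets N + x); the multiplicative ring fields are irrelevant.\<close>
definition quot_mod :: "('a, 'c) ring_scheme \<Rightarrow> ('a, 'm, 'd) module_scheme \<Rightarrow> 'm set \<Rightarrow> ('a, 'm set) module" where
  "quot_mod R M N =
    \<lparr> carrier = {N +>\<^bsub>M\<^esub> x | x. x \<in> carrier M},
      mult = (\<lambda>U V. N), one = N,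
      ring.zero = N,
      ring.add = (\<lambda>U V. U <+>\<^bsub>M\<^esub> V),
      smult = (\<lambda>r U. \<Union>x\<in>U. N +>\<^bsub>M\<^esub> (r \<odot>\<^bsub>M\<^esub> x)) \<rparr>"

definition delta :: "'p \<Rightarrow> 'p \<Rightarrow> int" where
  "delta p = (\<lambda>q. if q = p then 1 else 0)"

text \<open>The subgroup of the free abelian group on X \<times> M generated by the defining relations of
  the tensor product; X \<otimes>_R M is the quotient by it.\<close>
inductive_set tensor_rel :: "('a, 'c) ring_scheme \<Rightarrow> ('a, 'x, 'd) module_scheme \<Rightarrow>
    ('a, 'm, 'e) module_scheme \<Rightarrow> ('x \<times> 'm \<Rightarrow> int) set"
  for R T M where
  tr_zero: "(\<lambda>_. 0) \<in> tensor_rel R T M"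
| tr_ladd: "\<lbrakk>x \<in> carrier T; x' \<in> carrier T; m \<in> carrier M\<rbrakk> \<Longrightarrow>
     (\<lambda>q. delta (x \<oplus>\<^bsub>T\<^esub> x', m) q - delta (x, m) q - delta (x', m) q) \<in> tensor_rel R T M"
| tr_radd: "\<lbrakk>x \<in> carrier T; m \<in> carrier M; m' \<in> carrier M\<rbrakk> \<Longrightarrow>
     (\<lambda>q. delta (x, m \<oplus>\<^bsub>M\<^esub> m') q - delta (x, m) q - delta (x, m') q) \<in> tensor_rel R T M"
| tr_bal: "\<lbrakk>r \<in> carrier R; x \<in> carrier T; m \<in> carrier M\<rbrakk> \<Longrightarrow>
     (\<lambda>q. delta (r \<odot>\<^bsub>T\<^esub> x, m) q - delta (x, r \<odot>\<^bsub>M\<^esub> m) q) \<in> tensor_rel R T M"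
| tr_add: "\<lbrakk>f \<in> tensor_rel R T M; g \<in> tensor_rel R T M\<rbrakk> \<Longrightarrow> (\<lambda>q. f q + g q) \<in> tensor_rel R T M"
| tr_neg: "f \<in> tensor_rel R T M \<Longrightarrow> (\<lambda>q. - f q) \<in> tensor_rel R T M"

type_synonym 'a std_module = "('a, 'a list set) module"

text \<open>N is a pure submodule of M: for every R-module X, the map X \<otimes> N \<rightarrow> X \<otimes> M is injective,
  i.e. a formal sum over X \<times> N that vanishes in X \<otimes> M already vanishes in X \<otimes> N.\<close>
definition pure_sub :: "('a, 'c) ring_scheme \<Rightarrow> ('a, 'm, 'd) module_scheme \<Rightarrow> 'm set \<Rightarrow> bool" where
  "pure_sub R M N \<longleftrightarrow> submodule N R M \<and>
     (\<forall>T :: 'a std_module. module R T \<longrightarrow>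
        (\<forall>f. finite {p. f p \<noteq> 0} \<and> {p. f p \<noteq> 0} \<subseteq> carrier T \<times> N \<and> f \<in> tensor_rel R T M
             \<longrightarrow> f \<in> tensor_rel R T (M\<lparr>carrier := N\<rparr>)))"

definition has_pcs_ic :: "('a, 'c) ring_scheme \<Rightarrow> ('a, 'm, 'd) module_scheme \<Rightarrow> bool" where
  "has_pcs_ic R M \<longleftrightarrow> (\<exists>(Ms :: nat \<Rightarrow> 'm set) n.
     Ms 0 = {\<zero>\<^bsub>M\<^esub>} \<and> Ms n = carrier M \<and>
     (\<forall>i\<le>n. pure_sub R M (Ms i)) \<and>
     (\<forall>i<n. Ms i \<subset> Ms (Suc i) \<and>
        cyclic_mod R (quot_mod R (M\<lparr>carrier := Ms (Suc i)\<rparr>) (Ms i)) \<and>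
        indecomposable R (quot_mod R (M\<lparr>carrier := Ms (Suc i)\<rparr>) (Ms i))))"

end

theory Submission
  imports Defs
begin


context cring
begin

lemma chain_union_ideal:
  assumes C: "C \<noteq> {}" "\<And>J. J \<in> C \<Longrightarrow> ideal J R"
    and ch: "\<And>U V. U \<in> C \<Longrightarrow> V \<in> C \<Longrightarrow> U \<subseteq> V \<or> V \<subseteq> U"
  shows "ideal (\<Union>C) R"
proof (rule idealI)
  show "ring R" by (rule ring_axioms)
  show "subgroup (\<Union>C) (add_monoid R)"
  proof
    show "\<Union>C \<subseteq> carrier (add_monoid R)" using C ideal.Icarr by fastforce
    fix x y assume "x \<in> \<Union>C" "y \<in> \<Union>C"
    then obtain X1 Y1 where XY: "X1 \<in> C" "Y1 \<in> C" "x \<in> X1" "y \<in> Y1" by blast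
    from ch[OF XY(1,2)] have "\<exists>Z\<in>C. x \<in> Z \<and> y \<in> Z" using XY by blast
    then obtain Z where Z: "Z \<in> C" "x \<in> Z" "y \<in> Z" by blast
    then have "x \<oplus> y \<in> Z" using C(2)[OF Z(1)] by (simp add: additive_subgroup.a_closed ideal.axioms(1))
    then show "x \<otimes>\<^bsub>add_monoid R\<^esub> y \<in> \<Union>C" using Z by auto
  next
    obtain X1 where "X1 \<in> C" using C by blast
    then show "\<one>\<^bsub>add_monoid R\<^esub> \<in> \<Union>C" using C(2)[of X1]
      by (auto intro!: bexI[of _ X1] simp: additive_subgroup.zero_closed ideal.axioms(1))
  next
    fix x assume "x \<in> \<Union>C"
    then obtain X1 where "X1 \<in> C" "x \<in> X1" by blast
    then show "inv\<^bsub>add_monoid R\<^esub> x \<in> \<Union>C" using C(2)[of X1]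
      by (metis UnionI a_inv_def additive_subgroup.a_inv_closed ideal.axioms(1))
  qed
next
  fix a x assume "a \<in> \<Union>C" "x \<in> carrier R"
  then obtain Z1 where "Z1 \<in> C" "a \<in> Z1" by blast
  then show "x \<otimes> a \<in> \<Union>C" using ideal.I_l_closed[OF C(2)[OF \<open>Z1 \<in> C\<close>]] \<open>x \<in> carrier R\<close> by blast
next
  fix a x assume "a \<in> \<Union>C" "x \<in> carrier R"
  then obtain Z1 where "Z1 \<in> C" "a \<in> Z1" by blast
  then show "a \<otimes> x \<in> \<Union>C" using ideal.I_r_closed[OF C(2)[OF \<open>Z1 \<in> C\<close>]] \<open>x \<in> carrier R\<close> by blast
qed

lemma zorn_ideal:
  assumes "ideal I R" "I \<inter> T = {}"
  shows "\<exists>Q. ideal Q R \<and> I \<subseteq> Q \<and> Q \<inter> T = {} \<and>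
     (\<forall>J. ideal J R \<and> Q \<subseteq> J \<and> J \<inter> T = {} \<longrightarrow> J = Q)"
proof -
  let ?A = "{Q. ideal Q R \<and> I \<subseteq> Q \<and> Q \<inter> T = {}}"
  have "\<exists>M\<in>?A. \<forall>Z1\<in>?A. M \<subseteq> Z1 \<longrightarrow> Z1 = M"
  proof (rule subset_Zorn_nonempty)
    have "I \<in> ?A" using assms by simp
    then show "?A \<noteq> {}" by force
    fix C assume C: "C \<noteq> {}" "subset.chain ?A C"
    then have "ideal (\<Union>C) R"
      by (intro chain_union_ideal) (auto simp: subset_chain_def)
    moreover have "I \<subseteq> \<Union>C"
    proof -
      obtain Z1 where "Z1 \<in> C" using C(1) by blast
      then have "I \<subseteq> Z1" using C(2) unfolding subset_chain_def by blast
      then show ?thesis using \<open>Z1 \<in> C\<close> by blast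
    qed
    moreover have "\<Union>C \<inter> T = {}" using C(2) unfolding subset_chain_def by blast
    ultimately show "\<Union>C \<in> ?A" by blast
  qed
  then obtain M where "M \<in> ?A" "\<forall>Z1\<in>?A. M \<subseteq> Z1 \<longrightarrow> Z1 = M" by blast
  then show ?thesis by (intro exI[of _ M]) (simp, blast)
qed

lemma krull:
  assumes "ideal I R" "\<one> \<notin> I"
  shows "\<exists>M. maximalideal M R \<and> I \<subseteq> M"
proof -
  obtain Q where Q: "ideal Q R" "I \<subseteq> Q" "Q \<inter> {\<one>} = {}"
    "\<And>J. ideal J R \<and> Q \<subseteq> J \<and> J \<inter> {\<one>} = {} \<Longrightarrow> J = Q"
  proof -
    have "I \<inter> {\<one>} = {}" using assms(2) by simp
    from zorn_ideal[OF assms(1) this] show ?thesis using that by metis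
  qed
  have "maximalideal Q R"
  proof (rule maximalidealI)
    show "ideal Q R" by fact
    show "carrier R \<noteq> Q" using Q(3) by auto
    fix J assume J: "ideal J R" "Q \<subseteq> J" "J \<subseteq> carrier R"
    show "J = Q \<or> J = carrier R"
    proof (cases "\<one> \<in> J")
      case True then show ?thesis using ideal.one_imp_carrier[OF J(1)] by blast
    next
      case False then show ?thesis using Q(4)[of J] J by blast
    qed
  qed
  then show ?thesis using Q by blast
qed

end

context cring begin
lemma prime_avoid:
  assumes "ideal I R" "I \<inter> T = {}" "\<one> \<in> T" "T \<subseteq> carrier R"
    and Tm: "\<And>a b. a \<in> T \<Longrightarrow> b \<in> T \<Longrightarrow> a \<otimes> b \<in> T"
  shows "\<exists>Q. primeideal Q R \<and> I \<subseteq> Q \<and> Q \<inter> T = {}"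
proof -
  obtain Q where Q: "ideal Q R" "I \<subseteq> Q" "Q \<inter> T = {}"
    and Qmax: "\<And>J. ideal J R \<and> Q \<subseteq> J \<and> J \<inter> T = {} \<Longrightarrow> J = Q"
    using zorn_ideal[OF assms(1,2)] by blast
  have key: "\<exists>q\<in>Q. \<exists>r\<in>carrier R. q \<oplus> r \<otimes> a \<in> T" if a: "a \<in> carrier R" "a \<notin> Q" for a
  proof -
    let ?J = "set_add R Q (cgenideal R a)"
    have J: "ideal ?J R" by (rule add_ideals[OF Q(1) cgenideal_ideal[OF a(1)]])
    have "Q \<subseteq> ?J"
    proof
      fix x assume "x \<in> Q"
      moreover have "\<zero> \<in> PIdl a" unfolding cgenideal_def using a by (auto intro!: exI[of _ \<zero>])
      moreover have "x = x \<oplus> \<zero>" using \<open>x \<in> Q\<close> ideal.Icarr[OF Q(1)] by simp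
      ultimately show "x \<in> ?J" unfolding set_add_def' by blast
    qed
    moreover have "a \<in> ?J"
    proof -
      have "a \<in> PIdl a" unfolding cgenideal_def using a by (auto intro!: exI[of _ \<one>])
      moreover have "a = \<zero> \<oplus> a" using a by simp
      moreover have "\<zero> \<in> Q" using Q(1) by (simp add: additive_subgroup.zero_closed ideal.axioms(1))
      ultimately show ?thesis unfolding set_add_def' by blast
    qed
    ultimately have "?J \<inter> T \<noteq> {}" using Qmax[of ?J] J a by blast
    then obtain t where "t \<in> ?J" "t \<in> T" by blast
    then show ?thesis unfolding set_add_def' cgenideal_def by blast
  qed
  have "primeideal Q R"
  proof (rule primeidealI)
    show "ideal Q R" by fact
    show "cring R" by (rule is_cring)
    show "carrier R \<noteq> Q" using Q(3) assms(3,4) by blast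
    fix a b assume ab: "a \<in> carrier R" "b \<in> carrier R" "a \<otimes> b \<in> Q"
    show "a \<in> Q \<or> b \<in> Q"
    proof (rule ccontr)
      assume "\<not> (a \<in> Q \<or> b \<in> Q)"
      then obtain q1 r1 q2 r2 where k: "q1 \<in> Q" "r1 \<in> carrier R" "q1 \<oplus> r1 \<otimes> a \<in> T"
        "q2 \<in> Q" "r2 \<in> carrier R" "q2 \<oplus> r2 \<otimes> b \<in> T"
        using key ab by meson
      have qc: "q1 \<in> carrier R" "q2 \<in> carrier R" using k ideal.Icarr[OF Q(1)] by auto
      have "(q1 \<oplus> r1 \<otimes> a) \<otimes> (q2 \<oplus> r2 \<otimes> b) = 
            q1 \<otimes> (q2 \<oplus> r2 \<otimes> b) \<oplus> (r1 \<otimes> a \<otimes> q2 \<oplus> (r1 \<otimes> r2) \<otimes> (a \<otimes> b))"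
        using qc k ab by algebra
      also have "\<dots> \<in> Q"
      proof -
        have 1: "q1 \<otimes> (q2 \<oplus> r2 \<otimes> b) \<in> Q" using qc k ab by (intro ideal.I_r_closed[OF Q(1)]) auto
        have 2: "r1 \<otimes> a \<otimes> q2 \<in> Q" using qc k ab by (intro ideal.I_l_closed[OF Q(1)]) auto
        have 3: "(r1 \<otimes> r2) \<otimes> (a \<otimes> b) \<in> Q" using ideal.I_l_closed[OF Q(1) ab(3)] k by auto
        show ?thesis using 1 2 3 by (intro additive_subgroup.a_closed[OF ideal.axioms(1)[OF Q(1)]])
      qed
      finally have "(q1 \<oplus> r1 \<otimes> a) \<otimes> (q2 \<oplus> r2 \<otimes> b) \<in> Q" .
      moreover have "(q1 \<oplus> r1 \<otimes> a) \<otimes> (q2 \<oplus> r2 \<otimes> b) \<in> T" using Tm k by blast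
      ultimately show False using Q(3) by blast
    qed
  qed
  then show ?thesis using Q by blast
qed

end


context cring
begin

lemma prime_pow:
  assumes "primeideal P R" "x \<in> carrier R" "x [^] (k::nat) \<in> P"
  shows "x \<in> P"
  using assms(3)
proof (induction k)
  case 0
  then have "\<one> \<in> P" by simp
  then show ?case using ideal.one_imp_carrier[OF primeideal.axioms(1)[OF assms(1)]]
      primeideal.I_notcarr[OF assms(1)] by blast
next
  case (Suc k)
  then have "x [^] k \<otimes> x \<in> P" by simp
  then show ?case using primeideal.I_prime[OF assms(1)] assms(2) Suc.IH by blast
qed

lemma prime_notin_mult:
  assumes "primeideal P R" "a \<in> carrier R" "b \<in> carrier R" "a \<notin> P" "b \<notin> P"
  shows "a \<otimes> b \<notin> P"
  using primeideal.I_prime[OF assms(1)] assms by blast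

lemma prime_one_notin:
  assumes "primeideal P R" shows "\<one> \<notin> P"
  using ideal.one_imp_carrier[OF primeideal.axioms(1)[OF assms(1)]]
      primeideal.I_notcarr[OF assms(1)] by blast

lemma nil_local:
  assumes Q: "primeideal Q R" and p: "p \<in> carrier R"
    and allp: "\<And>Q'. primeideal Q' R \<Longrightarrow> Q' \<subseteq> Q \<Longrightarrow> p \<in> Q'"
  shows "\<exists>u\<in>carrier R. u \<notin> Q \<and> (\<exists>k. u \<otimes> p [^] (k::nat) = \<zero>)"
proof (rule ccontr)
  assume H: "\<not> ?thesis"
  define T where "T = {u \<otimes> p [^] (k::nat) | u k. u \<in> carrier R \<and> u \<notin> Q}"
  have Tc: "T \<subseteq> carrier R" unfolding T_def using p by auto
  have H': "u \<otimes> p [^] (k::nat) \<noteq> \<zero>" if "u \<in> carrier R" "u \<notin> Q" for u k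
    using H that by blast
  have z: "{\<zero>} \<inter> T = {}" unfolding T_def using H' by fastforce
  have one: "\<one> \<in> T" unfolding T_def using prime_one_notin[OF Q]
    by (auto intro!: exI[of _ \<one>] exI[of _ "0::nat"])
  have mul: "a \<otimes> b \<in> T" if "a \<in> T" "b \<in> T" for a b
  proof -
    obtain u k where u: "a = u \<otimes> p [^] (k::nat)" "u \<in> carrier R" "u \<notin> Q" using \<open>a \<in> T\<close> unfolding T_def by blast
    obtain v l where v: "b = v \<otimes> p [^] (l::nat)" "v \<in> carrier R" "v \<notin> Q" using \<open>b \<in> T\<close> unfolding T_def by blast
    have "a \<otimes> b = (u \<otimes> v) \<otimes> (p [^] k \<otimes> p [^] l)" using u v p by (simp add: m_ac)
    also have "\<dots> = (u \<otimes> v) \<otimes> p [^] (k + l)" using p by (simp add: nat_pow_mult)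
    finally show ?thesis unfolding T_def using prime_notin_mult[OF Q] u v by blast
  qed
  obtain Q' where Q': "primeideal Q' R" "Q' \<inter> T = {}"
    using prime_avoid[OF zeroideal z one Tc mul] by blast
  have "Q' \<subseteq> Q"
  proof
    fix x assume "x \<in> Q'"
    then have xc: "x \<in> carrier R" using ideal.Icarr[OF primeideal.axioms(1)[OF Q'(1)]] by blast
    show "x \<in> Q"
    proof (rule ccontr)
      assume "x \<notin> Q"
      then have "x \<otimes> p [^] (0::nat) \<in> T" unfolding T_def using xc by blast
      then show False using xc Q'(2) \<open>x \<in> Q'\<close> by auto
    qed
  qed
  then have "p \<in> Q'" using allp Q'(1) by blast
  moreover have "\<one> \<otimes> p [^] (1::nat) \<in> T" unfolding T_def using prime_one_notin[OF Q] by blast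
  ultimately show False using Q'(2) p by auto
qed

lemma nilpotent_of_all_primes:
  assumes p: "p \<in> carrier R" and allp: "\<And>Q'. primeideal Q' R \<Longrightarrow> p \<in> Q'"
  shows "\<exists>k. p [^] (k::nat) = \<zero>"
proof (rule ccontr)
  assume H: "\<not> ?thesis"
  define T where "T = {p [^] (k::nat) | k. True}"
  have Tc: "T \<subseteq> carrier R" unfolding T_def using p by auto
  have z: "{\<zero>} \<inter> T = {}" unfolding T_def using H by auto
  have one: "\<one> \<in> T" unfolding T_def by (auto intro!: exI[of _ "0::nat"])
  have mul: "a \<otimes> b \<in> T" if "a \<in> T" "b \<in> T" for a b
    using that p unfolding T_def by (auto simp: nat_pow_mult)
  obtain Q' where Q': "primeideal Q' R" "Q' \<inter> T = {}"
    using prime_avoid[OF zeroideal z one Tc mul] by blast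
  have "p [^] (1::nat) \<in> T" unfolding T_def by blast
  then show False using Q' allp[OF Q'(1)] p by auto
qed

lemma finite_ann_combine:
  assumes "finite S" "primeideal M R" "S \<subseteq> carrier R"
    and "\<And>s. s \<in> S \<Longrightarrow> \<exists>u\<in>carrier R. u \<notin> M \<and> (\<exists>k. u \<otimes> s [^] (k::nat) = \<zero>)"
  shows "\<exists>v\<in>carrier R. v \<notin> M \<and> (\<exists>k. \<forall>s\<in>S. v \<otimes> s [^] (k::nat) = \<zero>)"
  using assms
proof (induction S rule: finite_induct)
  case empty
  then show ?case using prime_one_notin[OF assms(2)] by blast
next
  case (insert s0 S)
  obtain v k where v: "v \<in> carrier R" "v \<notin> M" "\<forall>s\<in>S. v \<otimes> s [^] (k::nat) = \<zero>"
    using insert by blast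
  obtain u l where u: "u \<in> carrier R" "u \<notin> M" "u \<otimes> s0 [^] (l::nat) = \<zero>"
    using insert.prems(3) by blast
  have s0: "s0 \<in> carrier R" using insert.prems(2) by simp
  have "\<forall>s\<in>insert s0 S. (v \<otimes> u) \<otimes> s [^] (k + l) = \<zero>"
  proof
    fix s assume s: "s \<in> insert s0 S"
    then have sc: "s \<in> carrier R" using insert.prems(2) by blast
    have e: "(v \<otimes> u) \<otimes> s [^] (k + l) = (v \<otimes> s [^] k) \<otimes> (u \<otimes> s [^] l)"
    proof -
      have "s [^] k \<in> carrier R" "s [^] l \<in> carrier R" using sc by simp_all
      then show ?thesis using sc u v by (simp add: nat_pow_mult[symmetric] m_ac)
    qed
    show "(v \<otimes> u) \<otimes> s [^] (k + l) = \<zero>"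
    proof (cases "s = s0")
      case True then show ?thesis using e u v sc by simp
    next
      case False then have "s \<in> S" using s by blast
      then show ?thesis using e u v sc by simp
    qed
  qed
  moreover have "v \<otimes> u \<notin> M" using prime_notin_mult[OF assms(2)] u v by blast
  ultimately show ?case using u v by blast
qed

lemma idem_from:
  assumes u: "u \<in> carrier R" and v: "v \<in> carrier R" and uv: "u \<oplus> v = \<one>"
    and nil: "(u \<otimes> v) [^] (N::nat) = \<zero>"
  shows "\<exists>e\<in>carrier R. e \<otimes> e = e \<and> (\<exists>\<alpha>\<in>carrier R. e = u [^] N \<otimes> \<alpha>)
      \<and> (\<exists>\<beta>\<in>carrier R. \<one> \<ominus> e = v [^] N \<otimes> \<beta>)"
proof -
  have s1: "\<exists>t\<in>carrier R. u [^] n \<oplus> v \<otimes> t = \<one>" for n :: nat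
  proof (induction n)
    case 0
    then show ?case using v by (intro bexI[of _ \<zero>]) auto
  next
    case (Suc n)
    then obtain t where t: "t \<in> carrier R" "u [^] n \<oplus> v \<otimes> t = \<one>" by blast
    have uu: "u = \<one> \<ominus> v"
    proof -
      have "u = (u \<oplus> v) \<ominus> v" using u v by algebra
      then show ?thesis using uv by simp
    qed
    have "u [^] Suc n \<oplus> v \<otimes> (t \<oplus> u [^] n) = (u [^] n \<oplus> v \<otimes> t) \<ominus> (u [^] n \<otimes> (\<one> \<ominus> u \<ominus> v))"
    proof -
      have un: "u [^] n \<in> carrier R" using u by simp
      show ?thesis using u v t(1) un by (simp only: nat_pow_Suc) algebra
    qed
    also have "\<one> \<ominus> u \<ominus> v = \<zero>" using uu u v by simp algebra
    finally show ?case using t u v by (intro bexI[of _ "t \<oplus> u [^] n"]) (auto simp: a_minus_def)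
  qed
  obtain t where t: "t \<in> carrier R" "u [^] N \<oplus> v \<otimes> t = \<one>" using s1 by blast
  have s2: "\<exists>\<alpha>\<in>carrier R. \<exists>\<beta>\<in>carrier R. u [^] N \<otimes> \<alpha> \<oplus> v [^] m \<otimes> \<beta> = \<one>" for m :: nat
  proof (induction m)
    case 0
    then show ?case using u by (intro bexI[of _ \<zero>] bexI[of _ \<one>]) auto
  next
    case (Suc m)
    then obtain \<alpha> \<beta> where ab: "\<alpha> \<in> carrier R" "\<beta> \<in> carrier R" "u [^] N \<otimes> \<alpha> \<oplus> v [^] m \<otimes> \<beta> = \<one>" by blast
    have "u [^] N \<otimes> (\<alpha> \<oplus> v [^] m \<otimes> \<beta>) \<oplus> v [^] Suc m \<otimes> (\<beta> \<otimes> t)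
          = u [^] N \<otimes> \<alpha> \<oplus> (v [^] m \<otimes> \<beta>) \<otimes> (u [^] N \<oplus> v \<otimes> t)"
    proof -
      have pw: "u [^] N \<in> carrier R" "v [^] m \<in> carrier R" using u v by simp_all
      show ?thesis using u v t(1) ab(1,2) pw by (simp only: nat_pow_Suc) algebra
    qed
    also have "\<dots> = \<one>" using t ab u v by simp
    finally show ?case using ab t u v by (intro bexI[of _ "\<alpha> \<oplus> v [^] m \<otimes> \<beta>"] bexI[of _ "\<beta> \<otimes> t"]) auto
  qed
  obtain \<alpha> \<beta> where ab: "\<alpha> \<in> carrier R" "\<beta> \<in> carrier R" "u [^] N \<otimes> \<alpha> \<oplus> v [^] N \<otimes> \<beta> = \<one>"
    using s2 by blast
  define e where "e = u [^] N \<otimes> \<alpha>"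
  have ec: "e \<in> carrier R" unfolding e_def using u ab by simp
  have wc: "v [^] N \<otimes> \<beta> \<in> carrier R" using v ab by simp
  have ome: "\<one> \<ominus> e = v [^] N \<otimes> \<beta>"
  proof -
    have "\<one> \<ominus> e = (e \<oplus> v [^] N \<otimes> \<beta>) \<ominus> e" using ab(3) unfolding e_def by simp
    also have "\<dots> = v [^] N \<otimes> \<beta>" using ec wc by algebra
    finally show ?thesis .
  qed
  have "e \<otimes> (\<one> \<ominus> e) = e \<otimes> (v [^] N \<otimes> \<beta>)" using ome by simp
  also have "\<dots> = (u \<otimes> v) [^] N \<otimes> (\<alpha> \<otimes> \<beta>)"
    unfolding e_def using u v ab(1,2) by (simp add: pow_mult_distrib[OF m_comm] m_ac)
  also have "\<dots> = \<zero>" using nil ab by simp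
  finally have "e \<otimes> (\<one> \<ominus> e) = \<zero>" .
  moreover have "e \<otimes> (\<one> \<ominus> e) = e \<ominus> e \<otimes> e" using ec by algebra
  ultimately have "e \<ominus> e \<otimes> e = \<zero>" by simp
  then have "e \<otimes> e = e" using ec by simp
  then show ?thesis using ec ab ome unfolding e_def by blast
qed

end


context cring
begin

lemma loc_refl:
  assumes "x \<in> carrier R" "s \<in> S" "\<one> \<in> S" "S \<subseteq> carrier R"
  shows "((x, s), (x, s)) \<in> loc_rel R S"
  using assms unfolding loc_rel_def by (auto intro!: bexI[of _ \<one>])

lemma loc_core:
  assumes M: "maximalideal M R" and Q: "primeideal Q R" "Q \<subseteq> M"
    and a: "a \<in> carrier R" "b \<in> carrier R" "a \<in> Q"
    and c': "c' \<in> carrier (localization R (carrier R - M))"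
    and eq: "loc_class R (carrier R - M) (b, \<one>) =
       loc_class R (carrier R - M) (a, \<one>) \<otimes>\<^bsub>localization R (carrier R - M)\<^esub> c'"
  shows "b \<in> Q"
proof -
  define S where "S = carrier R - M"
  have MP: "primeideal M R" using maximalideal_prime[OF M] .
  have S1: "\<one> \<in> S" unfolding S_def using prime_one_notin[OF MP] by simp
  have SC: "S \<subseteq> carrier R" unfolding S_def by blast
  have SQ: "x \<notin> Q" if "x \<in> S" for x using that Q(2) unfolding S_def by blast
  define U where "U = loc_class R S (a, \<one>)"
  have mult: "U \<otimes>\<^bsub>localization R S\<^esub> c' = loc_class R S
      (fst (SOME p. p \<in> U) \<otimes> fst (SOME q. q \<in> c'), snd (SOME p. p \<in> U) \<otimes> snd (SOME q. q \<in> c'))"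
    by (simp add: localization_def Let_def)
  have aU: "(a, \<one>) \<in> U" unfolding U_def loc_class_def using loc_refl[OF a(1) S1 S1 SC] by simp
  define p0 where "p0 = (SOME p. p \<in> U)"
  have p0U: "p0 \<in> U" unfolding p0_def using aU by (rule someI)
  obtain a' t where p0: "p0 = (a', t)" by (cases p0)
  have "((a, \<one>), (a', t)) \<in> loc_rel R S" using p0U unfolding p0 U_def loc_class_def by simp
  then obtain u1 where u1: "a' \<in> carrier R" "t \<in> S" "u1 \<in> S" "u1 \<otimes> ((a \<otimes> t) \<ominus> (a' \<otimes> \<one>)) = \<zero>"
    unfolding loc_rel_def by auto
  have "c' \<in> (carrier R \<times> S) // loc_rel R S" using c' unfolding S_def by (simp add: localization_def)
  then obtain x0 where x0: "x0 \<in> carrier R \<times> S" "c' = loc_rel R S `` {x0}" by (rule quotientE)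
  have x0c: "x0 \<in> c'" using x0 loc_refl[of "fst x0" "snd x0" S] S1 SC by (cases x0) auto
  define q0 where "q0 = (SOME q. q \<in> c')"
  have q0c: "q0 \<in> c'" unfolding q0_def using x0c by (rule someI)
  obtain c s where q0: "q0 = (c, s)" by (cases q0)
  have "(x0, (c, s)) \<in> loc_rel R S" using q0c x0 unfolding q0 by simp
  then have cs: "c \<in> carrier R" "s \<in> S" unfolding loc_rel_def by auto
  have "loc_class R S (b, \<one>) = loc_class R S (a' \<otimes> c, t \<otimes> s)"
    using eq mult unfolding S_def[symmetric] U_def[symmetric] p0_def[symmetric] q0_def[symmetric] p0 q0
    by simp
  moreover have "(b, \<one>) \<in> loc_class R S (b, \<one>)" unfolding loc_class_def
    using loc_refl[OF a(2) S1 S1 SC] by simp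
  ultimately have "((a' \<otimes> c, t \<otimes> s), (b, \<one>)) \<in> loc_rel R S" unfolding loc_class_def by simp
  then obtain u2 where u2: "u2 \<in> S" "u2 \<otimes> ((a' \<otimes> c) \<otimes> \<one> \<ominus> b \<otimes> (t \<otimes> s)) = \<zero>"
    unfolding loc_rel_def by auto
  have cc: "u1 \<in> carrier R" "u2 \<in> carrier R" "t \<in> carrier R" "s \<in> carrier R"
    using u1 u2 cs SC by auto
  have X0: "u1 \<otimes> (u2 \<otimes> ((a' \<otimes> c) \<otimes> \<one> \<ominus> b \<otimes> (t \<otimes> s))) \<oplus> (u2 \<otimes> c) \<otimes> (u1 \<otimes> ((a \<otimes> t) \<ominus> (a' \<otimes> \<one>))) = \<zero>"
    using u1(4) u2(2) cc cs u1(1) a by simp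
  have X1: "u1 \<otimes> (u2 \<otimes> ((a' \<otimes> c) \<otimes> \<one> \<ominus> b \<otimes> (t \<otimes> s))) \<oplus> (u2 \<otimes> c) \<otimes> (u1 \<otimes> ((a \<otimes> t) \<ominus> (a' \<otimes> \<one>)))
      = (u2 \<otimes> c \<otimes> u1 \<otimes> t) \<otimes> a \<ominus> (u1 \<otimes> u2 \<otimes> t \<otimes> s) \<otimes> b"
    using cc cs u1(1) a(1,2) by algebra
  have E: "(u2 \<otimes> c \<otimes> u1 \<otimes> t) \<otimes> a = (u1 \<otimes> u2 \<otimes> t \<otimes> s) \<otimes> b"
    using X0 X1 cc cs a by simp
  have "(u2 \<otimes> c \<otimes> u1 \<otimes> t) \<otimes> a \<in> Q"
    using ideal.I_l_closed[OF primeideal.axioms(1)[OF Q(1)] a(3)] cc cs by simp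
  then have inQ: "(u1 \<otimes> u2 \<otimes> t \<otimes> s) \<otimes> b \<in> Q" using E by simp
  have n0: "u1 \<notin> Q" "u2 \<notin> Q" "t \<notin> Q" "s \<notin> Q" using SQ u1(2,3) u2(1) cs(2) by auto
  have n1: "u1 \<otimes> u2 \<notin> Q" by (rule prime_notin_mult[OF Q(1) cc(1,2) n0(1,2)])
  have n2: "u1 \<otimes> u2 \<otimes> t \<notin> Q" by (rule prime_notin_mult[OF Q(1) _ cc(3) n1 n0(3)]) (use cc in simp)
  have n3: "u1 \<otimes> u2 \<otimes> t \<otimes> s \<notin> Q" by (rule prime_notin_mult[OF Q(1) _ cc(4) n2 n0(4)]) (use cc in simp)
  have "u1 \<otimes> u2 \<otimes> t \<otimes> s \<in> Q \<or> b \<in> Q"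
    by (rule primeideal.I_prime[OF Q(1) _ a(2) inQ]) (use cc in simp)
  then show ?thesis using n3 by blast
qed

lemma loc_elem:
  assumes "maximalideal M R" "a \<in> carrier R"
  shows "loc_class R (carrier R - M) (a, \<one>) \<in> carrier (localization R (carrier R - M))"
proof -
  have "\<one> \<notin> M" using prime_one_notin[OF maximalideal_prime[OF assms(1)]] .
  then have "(a, \<one>) \<in> carrier R \<times> (carrier R - M)" using assms(2) by simp
  then show ?thesis unfolding loc_class_def by (simp add: localization_def quotientI)
qed

lemma primes_chain:
  assumes ar: "arithmetic R" and M: "maximalideal M R"
    and Q1: "primeideal Q1 R" "Q1 \<subseteq> M" and Q2: "primeideal Q2 R" "Q2 \<subseteq> M"
  shows "Q1 \<subseteq> Q2 \<or> Q2 \<subseteq> Q1"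
proof (rule ccontr)
  assume "\<not> ?thesis"
  then obtain a b where ab: "a \<in> Q1" "a \<notin> Q2" "b \<in> Q2" "b \<notin> Q1" by blast
  have ac: "a \<in> carrier R" "b \<in> carrier R"
    using ab ideal.Icarr[OF primeideal.axioms(1)[OF Q1(1)]] ideal.Icarr[OF primeideal.axioms(1)[OF Q2(1)]] by auto
  have V: "valuation_ring (localization R (carrier R - M))" using ar M unfolding arithmetic_def by blast
  let ?L = "localization R (carrier R - M)"
  have "(\<exists>c\<in>carrier ?L. loc_class R (carrier R - M) (b, \<one>) = loc_class R (carrier R - M) (a, \<one>) \<otimes>\<^bsub>?L\<^esub> c) \<or>
        (\<exists>c\<in>carrier ?L. loc_class R (carrier R - M) (a, \<one>) = loc_class R (carrier R - M) (b, \<one>) \<otimes>\<^bsub>?L\<^esub> c)"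
    using V loc_elem[OF M ac(1)] loc_elem[OF M ac(2)] unfolding valuation_ring_def by blast
  then show False
  proof
    assume "\<exists>c\<in>carrier ?L. loc_class R (carrier R - M) (b, \<one>) = loc_class R (carrier R - M) (a, \<one>) \<otimes>\<^bsub>?L\<^esub> c"
    then obtain c where "c \<in> carrier ?L" "loc_class R (carrier R - M) (b, \<one>) = loc_class R (carrier R - M) (a, \<one>) \<otimes>\<^bsub>?L\<^esub> c" by blast
    from loc_core[OF M Q1 ac(1,2) ab(1) this] ab(4) show False by blast
  next
    assume "\<exists>c\<in>carrier ?L. loc_class R (carrier R - M) (a, \<one>) = loc_class R (carrier R - M) (b, \<one>) \<otimes>\<^bsub>?L\<^esub> c"
    then obtain c where "c \<in> carrier ?L" "loc_class R (carrier R - M) (a, \<one>) = loc_class R (carrier R - M) (b, \<one>) \<otimes>\<^bsub>?L\<^esub> c" by blast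
    from loc_core[OF M Q2 ac(2,1) ab(3) this] ab(2) show False by blast
  qed
qed

definition minp :: "'a set \<Rightarrow> 'a set" where
  "minp M = \<Inter>{Q. primeideal Q R \<and> Q \<subseteq> M}"

lemma minp_props:
  assumes ar: "arithmetic R" and M: "maximalideal M R"
  shows "primeideal (minp M) R" "minp M \<in> Minspec R"
    "\<And>Q. primeideal Q R \<Longrightarrow> Q \<subseteq> M \<Longrightarrow> minp M \<subseteq> Q"
proof -
  let ?S = "{Q. primeideal Q R \<and> Q \<subseteq> M}"
  have MP: "primeideal M R" using maximalideal_prime[OF M] .
  have ne: "?S \<noteq> {}" using MP by blast
  show low: "\<And>Q. primeideal Q R \<Longrightarrow> Q \<subseteq> M \<Longrightarrow> minp M \<subseteq> Q" unfolding minp_def by blast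
  have id: "ideal (minp M) R" unfolding minp_def
    by (rule i_Intersect) (use ne in \<open>auto intro: primeideal.axioms(1)\<close>)
  show pr: "primeideal (minp M) R"
  proof (rule primeidealI[OF id is_cring])
    show "carrier R \<noteq> minp M" using prime_one_notin[OF MP] low[OF MP] by auto
    fix a b assume ab: "a \<in> carrier R" "b \<in> carrier R" "a \<otimes> b \<in> minp M"
    show "a \<in> minp M \<or> b \<in> minp M"
    proof (rule ccontr)
      assume "\<not> ?thesis"
      then obtain Qa Qb where Q: "Qa \<in> ?S" "a \<notin> Qa" "Qb \<in> ?S" "b \<notin> Qb" unfolding minp_def by blast
      have abQ: "a \<otimes> b \<in> Qa" "a \<otimes> b \<in> Qb" using ab(3) Q unfolding minp_def by blast+
      have "Qa \<subseteq> Qb \<or> Qb \<subseteq> Qa" using primes_chain[OF ar M] Q by blast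
      then show False
      proof
        assume "Qa \<subseteq> Qb"
        then have "b \<notin> Qa" using Q by blast
        then show False using primeideal.I_prime[of Qa R a b] Q abQ ab by blast
      next
        assume "Qb \<subseteq> Qa"
        then have "a \<notin> Qb" using Q by blast
        then show False using primeideal.I_prime[of Qb R a b] Q abQ ab by blast
      qed
    qed
  qed
  have sub: "minp M \<subseteq> M" using low[OF MP] by simp
  show "minp M \<in> Minspec R" unfolding Minspec_def
  proof (intro CollectI conjI allI impI pr)
    fix Q assume "primeideal Q R \<and> Q \<subseteq> minp M"
    then show "Q = minp M" using low sub by blast
  qed
qed

end


context cring
begin

lemma idealI_simple:
  assumes "I \<subseteq> carrier R" "\<zero> \<in> I" "\<And>x y. x \<in> I \<Longrightarrow> y \<in> I \<Longrightarrow> x \<oplus> y \<in> I"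
    "\<And>x. x \<in> I \<Longrightarrow> \<ominus> x \<in> I" "\<And>x a. x \<in> I \<Longrightarrow> a \<in> carrier R \<Longrightarrow> a \<otimes> x \<in> I"
  shows "ideal I R"
proof (rule idealI)
  show "ring R" by (rule ring_axioms)
  show "subgroup I (add_monoid R)"
    using assms(1-4) by (unfold_locales) (auto simp: a_inv_def[symmetric])
  show "\<And>a x. a \<in> I \<Longrightarrow> x \<in> carrier R \<Longrightarrow> x \<otimes> a \<in> I" using assms(5) by blast
  show "\<And>a x. a \<in> I \<Longrightarrow> x \<in> carrier R \<Longrightarrow> a \<otimes> x \<in> I" using assms(5) assms(1) m_comm by (metis subsetD)
qed

lemma ann_pow_ideal:
  assumes "Sx \<subseteq> carrier R"
  shows "ideal {v \<in> carrier R. \<exists>k::nat. \<forall>s\<in>Sx. v \<otimes> s [^] k = \<zero>} R"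
proof (rule idealI_simple)
  show "\<zero> \<in> {v \<in> carrier R. \<exists>k::nat. \<forall>s\<in>Sx. v \<otimes> s [^] k = \<zero>}" by (auto intro!: exI[of _ "0::nat"])
next
  fix x y assume x: "x \<in> {v \<in> carrier R. \<exists>k::nat. \<forall>s\<in>Sx. v \<otimes> s [^] k = \<zero>}"
    and y: "y \<in> {v \<in> carrier R. \<exists>k::nat. \<forall>s\<in>Sx. v \<otimes> s [^] k = \<zero>}"
  then obtain k l where k: "x \<in> carrier R" "\<forall>s\<in>Sx. x \<otimes> s [^] (k::nat) = \<zero>"
    and l: "y \<in> carrier R" "\<forall>s\<in>Sx. y \<otimes> s [^] (l::nat) = \<zero>" by blast
  have "\<forall>s\<in>Sx. (x \<oplus> y) \<otimes> s [^] (k + l) = \<zero>"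
  proof
    fix s assume s: "s \<in> Sx"
    then have sc: "s \<in> carrier R" using assms by blast
    have pk: "s [^] k \<in> carrier R" "s [^] l \<in> carrier R" using sc by simp_all
    have "(x \<oplus> y) \<otimes> s [^] (k + l) = (x \<oplus> y) \<otimes> (s [^] k \<otimes> s [^] l)" using sc by (simp add: nat_pow_mult)
    also have "\<dots> = (x \<otimes> s [^] k) \<otimes> s [^] l \<oplus> (y \<otimes> s [^] l) \<otimes> s [^] k"
      using pk k(1) l(1) by algebra
    finally have "(x \<oplus> y) \<otimes> s [^] (k + l) = (x \<otimes> s [^] k) \<otimes> s [^] l \<oplus> (y \<otimes> s [^] l) \<otimes> s [^] k" .
    then show "(x \<oplus> y) \<otimes> s [^] (k + l) = \<zero>" using k l s sc by simp
  qed
  then show "x \<oplus> y \<in> {v \<in> carrier R. \<exists>k::nat. \<forall>s\<in>Sx. v \<otimes> s [^] k = \<zero>}" using k(1) l(1) by blast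
next
  fix x assume x: "x \<in> {v \<in> carrier R. \<exists>k::nat. \<forall>s\<in>Sx. v \<otimes> s [^] k = \<zero>}"
  then obtain k where k: "x \<in> carrier R" "\<forall>s\<in>Sx. x \<otimes> s [^] (k::nat) = \<zero>" by blast
  have "\<forall>s\<in>Sx. (\<ominus> x) \<otimes> s [^] k = \<zero>" using k assms by (auto simp: l_minus)
  then show "\<ominus> x \<in> {v \<in> carrier R. \<exists>k::nat. \<forall>s\<in>Sx. v \<otimes> s [^] k = \<zero>}" using k by blast
next
  fix x a assume x: "x \<in> {v \<in> carrier R. \<exists>k::nat. \<forall>s\<in>Sx. v \<otimes> s [^] k = \<zero>}" and a: "a \<in> carrier R"
  then obtain k where k: "x \<in> carrier R" "\<forall>s\<in>Sx. x \<otimes> s [^] (k::nat) = \<zero>" by blast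
  have "\<forall>s\<in>Sx. (a \<otimes> x) \<otimes> s [^] k = \<zero>" using k assms a by (auto simp: m_assoc)
  then show "a \<otimes> x \<in> {v \<in> carrier R. \<exists>k::nat. \<forall>s\<in>Sx. v \<otimes> s [^] k = \<zero>}" using k a by blast
qed auto

lemma ann_zero_prime:
  assumes "primeideal P R" "v \<in> carrier R" "s \<in> carrier R" "v \<otimes> s [^] (k::nat) = \<zero>" "s \<notin> P"
  shows "v \<in> P"
proof -
  have "v \<otimes> s [^] k \<in> P" using assms(4) additive_subgroup.zero_closed[OF ideal.axioms(1)[OF primeideal.axioms(1)[OF assms(1)]]] by simp
  then have "v \<in> P \<or> s [^] k \<in> P" using primeideal.I_prime[OF assms(1)] assms(2,3) by simp
  then show ?thesis using prime_pow[OF assms(1,3)] assms(5) by blast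
qed

lemma minspec_prime: "P \<in> Minspec R \<Longrightarrow> primeideal P R"
  unfolding Minspec_def by blast

lemma minspec_min: "P \<in> Minspec R \<Longrightarrow> primeideal Q R \<Longrightarrow> Q \<subseteq> P \<Longrightarrow> Q = P"
  unfolding Minspec_def by blast

lemma sep:
  assumes ar: "arithmetic R" and comp: "compactin (zariski R) (Minspec R)"
    and P0: "P0 \<in> Minspec R" and Q0: "Q0 \<in> Minspec R" and ne: "P0 \<noteq> Q0"
  shows "\<exists>e\<in>carrier R. e \<otimes> e = e \<and> e \<in> Q0 \<and> \<one> \<ominus> e \<in> P0"
proof -
  have P0p: "primeideal P0 R" and Q0p: "primeideal Q0 R" using P0 Q0 minspec_prime by auto
  have "\<not> P0 \<subseteq> Q0" using minspec_min[OF Q0 P0p] ne by blast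
  then obtain p where p: "p \<in> P0" "p \<notin> Q0" by blast
  have pc: "p \<in> carrier R" using p ideal.Icarr[OF primeideal.axioms(1)[OF P0p]] by blast
  define I0 where "I0 = {v \<in> carrier R. \<exists>k::nat. \<forall>s\<in>{p}. v \<otimes> s [^] k = \<zero>}"
  have I0_iff: "u \<in> I0 \<longleftrightarrow> u \<in> carrier R \<and> (\<exists>k::nat. u \<otimes> p [^] k = \<zero>)" for u
    unfolding I0_def by simp
  have I0i: "ideal I0 R" unfolding I0_def by (rule ann_pow_ideal) (use pc in simp)
  define D where "D a = {P. primeideal P R \<and> a \<notin> P}" for a
  have opn: "openin (zariski R) (D a)" if "a \<in> carrier R" for a
    unfolding zariski_def D_def by (rule topology_generated_by_Basis) (use that in blast)
  have IC: "insert p I0 \<subseteq> carrier R" using pc I0_iff by auto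
  have cov: "Minspec R \<subseteq> \<Union>(D ` insert p I0)"
  proof
    fix P assume P: "P \<in> Minspec R"
    have Pp: "primeideal P R" using minspec_prime[OF P] .
    show "P \<in> \<Union>(D ` insert p I0)"
    proof (cases "p \<in> P")
      case False then show ?thesis unfolding D_def using Pp by blast
    next
      case True
      have "\<exists>u\<in>carrier R. u \<notin> P \<and> (\<exists>k. u \<otimes> p [^] (k::nat) = \<zero>)"
        by (rule nil_local[OF Pp pc]) (use minspec_min[OF P] True in blast)
      then obtain u where "u \<in> I0" "u \<notin> P" using I0_iff by blast
      then show ?thesis unfolding D_def using Pp by blast
    qed
  qed
  have opnU: "\<forall>U\<in>D ` insert p I0. openin (zariski R) U" using opn IC by blast
  have "\<exists>F. finite F \<and> F \<subseteq> D ` insert p I0 \<and> Minspec R \<subseteq> \<Union>F"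
    using comp opnU cov unfolding compactin_def by blast
  then obtain F where F: "finite F" "F \<subseteq> D ` insert p I0" "Minspec R \<subseteq> \<Union>F" by blast
  obtain B0 where B0: "B0 \<subseteq> insert p I0" "finite B0" "F = D ` B0"
    using finite_subset_image[OF F(1,2)] by blast
  define S where "S = B0 - {p}"
  have SI0: "S \<subseteq> I0" and Sfin: "finite S" using B0 unfolding S_def by auto
  have SC: "S \<subseteq> carrier R" using SI0 I0_iff by blast
  have fi: "\<exists>s\<in>S. s \<notin> P" if P: "P \<in> Minspec R" "p \<in> P" for P
  proof -
    obtain b where "b \<in> B0" "P \<in> D b" using F(3) B0(3) P(1) by blast
    then show ?thesis unfolding S_def D_def using P(2) by blast
  qed
  have fii: "s \<in> P" if P: "primeideal P R" "p \<notin> P" "s \<in> S" for P s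
  proof -
    obtain k where "s \<otimes> p [^] (k::nat) = \<zero>" using SI0 I0_iff \<open>s \<in> S\<close> by blast
    then show ?thesis using ann_zero_prime[OF P(1) _ pc] SC that by blast
  qed
  define I1 where "I1 = {v \<in> carrier R. \<exists>k::nat. \<forall>s\<in>S. v \<otimes> s [^] k = \<zero>}"
  have I1i: "ideal I1 R" unfolding I1_def by (rule ann_pow_ideal[OF SC])
  define K where "K = set_add R I0 I1"
  have Ki: "ideal K R" unfolding K_def by (rule add_ideals[OF I0i I1i])
  have I0K: "I0 \<subseteq> K"
  proof
    fix x assume "x \<in> I0"
    moreover have "\<zero> \<in> I1" using additive_subgroup.zero_closed[OF ideal.axioms(1)[OF I1i]] .
    moreover have "x = x \<oplus> \<zero>" using \<open>x \<in> I0\<close> I0_iff by simp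
    ultimately show "x \<in> K" unfolding K_def set_add_def' by blast
  qed
  have I1K: "I1 \<subseteq> K"
  proof
    fix x assume "x \<in> I1"
    moreover have "\<zero> \<in> I0" using additive_subgroup.zero_closed[OF ideal.axioms(1)[OF I0i]] .
    moreover have "x = \<zero> \<oplus> x" using \<open>x \<in> I1\<close> unfolding I1_def by simp
    ultimately show "x \<in> K" unfolding K_def set_add_def' by blast
  qed
  have one: "\<one> \<in> K"
  proof (rule ccontr)
    assume "\<one> \<notin> K"
    then obtain M where M: "maximalideal M R" "K \<subseteq> M" using krull[OF Ki] by blast
    have Mp: "primeideal M R" using maximalideal_prime[OF M(1)] .
    note mp = minp_props[OF ar M(1)]
    show False
    proof (cases "p \<in> minp M")
      case True
      have "\<exists>u\<in>carrier R. u \<notin> M \<and> (\<exists>k. u \<otimes> p [^] (k::nat) = \<zero>)"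
        by (rule nil_local[OF Mp pc]) (use mp(3) True in blast)
      then obtain u where "u \<in> I0" "u \<notin> M" using I0_iff by blast
      then show False using M(2) I0K by blast
    next
      case False
      have "\<exists>v\<in>carrier R. v \<notin> M \<and> (\<exists>k. \<forall>s\<in>S. v \<otimes> s [^] (k::nat) = \<zero>)"
      proof (rule finite_ann_combine[OF Sfin Mp SC])
        fix s assume "s \<in> S"
        then have "s \<in> minp M" using fii[OF mp(1) False] by blast
        then show "\<exists>u\<in>carrier R. u \<notin> M \<and> (\<exists>k. u \<otimes> s [^] (k::nat) = \<zero>)"
          by (intro nil_local[OF Mp]) (use SC \<open>s \<in> S\<close> mp(3) in blast)+
      qed
      then obtain v where "v \<in> I1" "v \<notin> M" unfolding I1_def by blast
      then show False using M(2) I1K by blast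
    qed
  qed
  then obtain u v where uv: "u \<in> I0" "v \<in> I1" "\<one> = u \<oplus> v" unfolding K_def set_add_def' by blast
  have uc: "u \<in> carrier R" and vc: "v \<in> carrier R" using uv I0_iff unfolding I1_def by auto
  obtain ku where ku: "u \<otimes> p [^] (ku::nat) = \<zero>" using uv I0_iff by blast
  obtain kv where kv: "\<forall>s\<in>S. v \<otimes> s [^] (kv::nat) = \<zero>" using uv unfolding I1_def by blast
  have allpr: "u \<otimes> v \<in> Q" if Q: "primeideal Q R" for Q
  proof (rule ccontr)
    assume nQ: "u \<otimes> v \<notin> Q"
    have "u \<notin> Q" "v \<notin> Q"
      using nQ ideal.I_r_closed[OF primeideal.axioms(1)[OF Q]] ideal.I_l_closed[OF primeideal.axioms(1)[OF Q]] uc vc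
      by blast+
    obtain M where M: "maximalideal M R" "Q \<subseteq> M"
      using krull[OF primeideal.axioms(1)[OF Q] prime_one_notin[OF Q]] by blast
    have Mp: "primeideal M R" using maximalideal_prime[OF M(1)] .
    note mp = minp_props[OF ar M(1)]
    have sub: "minp M \<subseteq> Q" using mp(3)[OF Q M(2)] .
    have nu: "u \<notin> minp M" "v \<notin> minp M" using sub \<open>u \<notin> Q\<close> \<open>v \<notin> Q\<close> by blast+
    show False
    proof (cases "p \<in> minp M")
      case False
      then show False using ann_zero_prime[OF mp(1) uc pc ku] nu by blast
    next
      case True
      then obtain s where s: "s \<in> S" "s \<notin> minp M" using fi[OF mp(2)] by blast
      then show False using ann_zero_prime[OF mp(1) vc _ _ s(2)] kv SC nu by blast
    qed
  qed
  obtain N where N: "(u \<otimes> v) [^] (N::nat) = \<zero>"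
    using nilpotent_of_all_primes[OF _ allpr] uc vc by blast
  have N': "(u \<otimes> v) [^] (Suc N) = \<zero>" using N uc vc by simp
  obtain e \<alpha> \<beta> where e: "e \<in> carrier R" "e \<otimes> e = e" "\<alpha> \<in> carrier R" "e = u [^] Suc N \<otimes> \<alpha>"
      "\<beta> \<in> carrier R" "\<one> \<ominus> e = v [^] Suc N \<otimes> \<beta>"
    using idem_from[OF uc vc uv(3)[symmetric] N'] by blast
  have "u \<in> Q0" using ann_zero_prime[OF Q0p uc pc ku p(2)] .
  then have "u [^] Suc N \<otimes> \<alpha> \<in> Q0"
    using uc e(3) ideal.I_l_closed[OF primeideal.axioms(1)[OF Q0p]] ideal.I_r_closed[OF primeideal.axioms(1)[OF Q0p]]
    by simp
  moreover have "v [^] Suc N \<otimes> \<beta> \<in> P0"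
  proof -
    obtain s where s: "s \<in> S" "s \<notin> P0" using fi[OF P0 p(1)] by blast
    have "v \<in> P0" using ann_zero_prime[OF P0p vc _ _ s(2)] kv s SC by blast
    then show ?thesis
      using vc e(5) ideal.I_l_closed[OF primeideal.axioms(1)[OF P0p]] ideal.I_r_closed[OF primeideal.axioms(1)[OF P0p]]
      by simp
  qed
  ultimately show ?thesis using e by auto
qed

end


lemma group_transfer:
  assumes "group G" "carrier H = carrier G" "mult H = mult G" "one H = one G"
  shows "group H"
proof -
  have m: "monoid G" using assms(1) group.is_monoid by blast
  have u: "carrier G \<subseteq> Units G" using assms(1) group.axioms(2) group_axioms_def by metis
  have "monoid H" using m unfolding monoid_def assms(2-4) .
  moreover have "carrier H \<subseteq> Units H" using u unfolding Units_def assms(2-4) .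
  ultimately show ?thesis unfolding group_def group_axioms_def by blast
qed

lemma quot_simps:
  fixes M (structure)
  shows "carrier (quot_mod R M N) = {N +> x | x. x \<in> carrier M}"
  "\<zero>\<^bsub>quot_mod R M N\<^esub> = N"
  "U \<oplus>\<^bsub>quot_mod R M N\<^esub> V = U <+> V"
  "r \<odot>\<^bsub>quot_mod R M N\<^esub> U = (\<Union>x\<in>U. N +> (r \<odot> x))"
  by (simp_all add: quot_mod_def)

lemma dichotomy:
  fixes R :: "('a, 'c) ring_scheme" and M (structure)
  assumes mod: "module R M" and N: "submodule N R M" and ind: "indecomposable R (quot_mod R M N)"
    and e: "e \<in> carrier R" "e \<otimes>\<^bsub>R\<^esub> e = e"
  shows "(\<forall>x\<in>carrier M. e \<odot> x \<in> N) \<or> (\<forall>x\<in>carrier M. (\<one>\<^bsub>R\<^esub> \<ominus>\<^bsub>R\<^esub> e) \<odot> x \<in> N)"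
proof -
  interpret module R M by (rule mod)
  define F where "F = quot_mod R M N"
  have sg: "subgroup N (add_monoid M)" using submodule.axioms(1)[OF N] .
  interpret AS: abelian_subgroup N M
    by (rule abelian_subgroupI3[OF additive_subgroup.intro[OF sg] module.axioms(2)[OF mod]])
  have NC: "N \<subseteq> carrier M" using subgroup.subset[OF sg] by simp
  have Nsm: "r \<odot> h \<in> N" if "r \<in> carrier R" "h \<in> N" for r h
    using submodule.smult_closed[OF N that] .
  have cF: "carrier F = {N +> x | x. x \<in> carrier M}" unfolding F_def by (rule quot_simps(1))
  have zF: "\<zero>\<^bsub>F\<^esub> = N" unfolding F_def by (rule quot_simps(2))
  have aF: "U \<oplus>\<^bsub>F\<^esub> V = U <+> V" for U V unfolding F_def by (rule quot_simps(3))
  have smF: "r \<odot>\<^bsub>F\<^esub> (N +> x) = N +> (r \<odot> x)" if "r \<in> carrier R" "x \<in> carrier M" for r x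
  proof -
    have "r \<odot>\<^bsub>F\<^esub> (N +> x) = (\<Union>y\<in>N +> x. N +> (r \<odot> y))" unfolding F_def by (rule quot_simps(4))
    also have "\<dots> = N +> (r \<odot> x)"
    proof -
      have "N +> (r \<odot> y) = N +> (r \<odot> x)" if "y \<in> N +> x" for y
      proof -
        obtain h where h: "h \<in> N" "y = h \<oplus> x" using \<open>y \<in> N +> x\<close> unfolding a_r_coset_def' by blast
        have hc: "h \<in> carrier M" using h NC by blast
        have "r \<odot> y = r \<odot> h \<oplus> r \<odot> x" using h hc \<open>r \<in> carrier R\<close> \<open>x \<in> carrier M\<close> by (simp add: smult_r_distr)
        then have "r \<odot> y \<in> N +> (r \<odot> x)" unfolding a_r_coset_def' using Nsm[OF \<open>r \<in> carrier R\<close> h(1)] by blast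
        then show ?thesis using a_repr_independence[OF _ _ sg] \<open>r \<in> carrier R\<close> \<open>x \<in> carrier M\<close> by simp
      qed
      moreover have "x \<in> N +> x" using AS.a_rcos_self[OF \<open>x \<in> carrier M\<close>] .
      ultimately show ?thesis by blast
    qed
    finally show ?thesis .
  qed
  have grp: "group (add_monoid F)"
  proof (rule group_transfer[OF AS.a_factorgroup_is_group])
    show "carrier (add_monoid F) = carrier (M A_Mod N)"
      by (auto simp: A_FactGroup_def' A_RCOSETS_def' cF)
    show "mult (add_monoid F) = mult (M A_Mod N)"
      by (auto simp: A_FactGroup_def' aF fun_eq_iff)
    show "one (add_monoid F) = one (M A_Mod N)"
      by (auto simp: A_FactGroup_def' zF)
  qed
  define A where "A c = {N +> (c \<odot> x) | x. x \<in> carrier M}" for c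
  have subA: "submodule (A c) R F" if c: "c \<in> carrier R" for c
  proof (intro submodule.intro subgroup.intro submodule_axioms.intro)
    show "A c \<subseteq> carrier (add_monoid F)" unfolding A_def cF using c by auto
    fix XX YY assume "XX \<in> A c" "YY \<in> A c"
    then obtain x y where xy: "x \<in> carrier M" "y \<in> carrier M" "XX = N +> (c \<odot> x)" "YY = N +> (c \<odot> y)"
      unfolding A_def by blast
    have "XX \<otimes>\<^bsub>add_monoid F\<^esub> YY = N +> (c \<odot> x \<oplus> c \<odot> y)"
      using xy c by (simp add: aF AS.a_rcos_sum)
    also have "\<dots> = N +> (c \<odot> (x \<oplus> y))" using xy c by (simp add: smult_r_distr)
    finally show "XX \<otimes>\<^bsub>add_monoid F\<^esub> YY \<in> A c" unfolding A_def using xy by blast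
  next
    have "N +> (c \<odot> \<zero>) = N" using c AS.a_rcos_const[of "\<zero>"] by simp
    then show "\<one>\<^bsub>add_monoid F\<^esub> \<in> A c" unfolding A_def using zF by force
  next
    fix XX assume "XX \<in> A c"
    then obtain x where x: "x \<in> carrier M" "XX = N +> (c \<odot> x)" unfolding A_def by blast
    have Xc: "XX \<in> carrier (add_monoid F)" using x c cF by auto
    have Yc: "N +> (c \<odot> (\<ominus> x)) \<in> carrier (add_monoid F)" using x c cF by auto
    have "(N +> (c \<odot> (\<ominus> x))) \<otimes>\<^bsub>add_monoid F\<^esub> XX = N +> (c \<odot> (\<ominus> x) \<oplus> c \<odot> x)"
      using x c by (simp add: aF AS.a_rcos_sum)
    also have "\<dots> = N +> \<zero>" using x c by (simp add: smult_r_distr[symmetric] M.l_neg)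
    also have "\<dots> = \<one>\<^bsub>add_monoid F\<^esub>" using AS.a_rcos_const[of "\<zero>"] zF by simp
    finally have "inv\<^bsub>add_monoid F\<^esub> XX = N +> (c \<odot> (\<ominus> x))"
      using group.inv_equality[OF grp _ Xc Yc] by simp
    then show "inv\<^bsub>add_monoid F\<^esub> XX \<in> A c" unfolding A_def using x by blast
  next
    fix r XX assume r: "r \<in> carrier R" and "XX \<in> A c"
    then obtain x where x: "x \<in> carrier M" "XX = N +> (c \<odot> x)" unfolding A_def by blast
    have "r \<odot>\<^bsub>F\<^esub> XX = N +> (r \<odot> (c \<odot> x))" using smF r x c by simp
    also have "\<dots> = N +> (c \<odot> (r \<odot> x))" using r c x by (simp add: smult_assoc1[symmetric] R.m_comm)
    finally show "r \<odot>\<^bsub>F\<^esub> XX \<in> A c" unfolding A_def using x r by blast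
  qed
  define f where "f = \<one>\<^bsub>R\<^esub> \<ominus>\<^bsub>R\<^esub> e"
  have fc: "f \<in> carrier R" unfolding f_def using e by simp
  have ef: "e \<otimes>\<^bsub>R\<^esub> f = \<zero>\<^bsub>R\<^esub>"
  proof -
    have "e \<otimes>\<^bsub>R\<^esub> f = e \<ominus>\<^bsub>R\<^esub> e \<otimes>\<^bsub>R\<^esub> e" unfolding f_def using e(1) by algebra
    then show ?thesis using e by simp
  qed
  have epf: "e \<oplus>\<^bsub>R\<^esub> f = \<one>\<^bsub>R\<^esub>" unfolding f_def using e(1) by algebra
  have int: "A e \<inter> A f = {\<zero>\<^bsub>F\<^esub>}"
  proof
    show "{\<zero>\<^bsub>F\<^esub>} \<subseteq> A e \<inter> A f"
      using subgroup.one_closed[OF submodule.axioms(1)[OF subA[OF e(1)]]]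
        subgroup.one_closed[OF submodule.axioms(1)[OF subA[OF fc]]] by simp
    show "A e \<inter> A f \<subseteq> {\<zero>\<^bsub>F\<^esub>}"
    proof
      fix XX assume "XX \<in> A e \<inter> A f"
      then obtain x y where xy: "x \<in> carrier M" "y \<in> carrier M" "XX = N +> (e \<odot> x)" "XX = N +> (f \<odot> y)"
        unfolding A_def by blast
      have "e \<odot> x \<in> N +> (f \<odot> y)" using AS.a_rcos_self[of "e \<odot> x"] xy e by simp
      then obtain h where h: "h \<in> N" "e \<odot> x = h \<oplus> f \<odot> y" unfolding a_r_coset_def' by blast
      have hc: "h \<in> carrier M" using h NC by blast
      have "e \<odot> x = e \<odot> (e \<odot> x)" using e xy by (simp add: smult_assoc1[symmetric])
      also have "\<dots> = e \<odot> h \<oplus> e \<odot> (f \<odot> y)" using h hc e fc xy by (simp add: smult_r_distr)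
      also have "e \<odot> (f \<odot> y) = \<zero>" using ef e fc xy by (simp add: smult_assoc1[symmetric])
      finally have "e \<odot> x = e \<odot> h" using hc e by simp
      then have "e \<odot> x \<in> N" using Nsm[OF e(1) h(1)] by simp
      then show "XX \<in> {\<zero>\<^bsub>F\<^esub>}" using xy AS.a_rcos_const zF by simp
    qed
  qed
  have gen: "gen_sub R F (A e \<union> A f) = carrier F"
  proof
    show "gen_sub R F (A e \<union> A f) \<subseteq> carrier F" unfolding gen_sub_def by blast
    show "carrier F \<subseteq> gen_sub R F (A e \<union> A f)"
    proof
      fix XX assume "XX \<in> carrier F"
      then obtain x where x: "x \<in> carrier M" "XX = N +> x" using cF by blast
      have "XX = (N +> (e \<odot> x)) <+> (N +> (f \<odot> x))"
      proof -
        have "e \<odot> x \<oplus> f \<odot> x = x" using x e fc epf by (simp add: smult_l_distr[symmetric])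
        then show ?thesis using x e fc by (simp add: AS.a_rcos_sum)
      qed
      moreover have "N +> (e \<odot> x) \<in> A e" "N +> (f \<odot> x) \<in> A f" unfolding A_def using x by blast+
      ultimately have "XX \<in> S" if "submodule S R F" "A e \<union> A f \<subseteq> S" for S
        using subgroup.m_closed[OF submodule.axioms(1)[OF that(1)], of "N +> (e \<odot> x)" "N +> (f \<odot> x)"] that(2)
        by (auto simp: aF)
      then show "XX \<in> gen_sub R F (A e \<union> A f)" unfolding gen_sub_def using \<open>XX \<in> carrier F\<close> by blast
    qed
  qed
  have "A e = {\<zero>\<^bsub>F\<^esub>} \<or> A f = {\<zero>\<^bsub>F\<^esub>}"
    using ind subA[OF e(1)] subA[OF fc] int gen unfolding indecomposable_def F_def by blast
  moreover have "c \<odot> x \<in> N" if "A c = {\<zero>\<^bsub>F\<^esub>}" "x \<in> carrier M" "c \<in> carrier R" for c x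
  proof -
    have "N +> (c \<odot> x) = N" using that zF unfolding A_def by blast
    then show ?thesis using AS.a_rcos_self[of "c \<odot> x"] that by simp
  qed
  ultimately show ?thesis using e(1) fc unfolding f_def by blast
qed


definition M0 :: "('a, 'c) ring_scheme \<Rightarrow> 'a std_module" where
  "M0 R = \<lparr> carrier = (\<lambda>a. {[a]}) ` carrier R, mult = (\<lambda>U V. U), one = {[\<one>\<^bsub>R\<^esub>]},
      ring.zero = {[\<zero>\<^bsub>R\<^esub>]},
      ring.add = (\<lambda>U V. {[hd (the_elem U) \<oplus>\<^bsub>R\<^esub> hd (the_elem V)]}),
      smult = (\<lambda>r U. {[r \<otimes>\<^bsub>R\<^esub> hd (the_elem U)]}) \<rparr>"

lemma M0_simps:
  "carrier (M0 R) = (\<lambda>a. {[a]}) ` carrier R"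
  "\<zero>\<^bsub>M0 R\<^esub> = {[\<zero>\<^bsub>R\<^esub>]}"
  "{[a]} \<oplus>\<^bsub>M0 R\<^esub> {[b]} = {[a \<oplus>\<^bsub>R\<^esub> b]}"
  "r \<odot>\<^bsub>M0 R\<^esub> {[b]} = {[r \<otimes>\<^bsub>R\<^esub> b]}"
  by (simp_all add: M0_def)

lemma M0_module:
  assumes "cring R" shows "module R (M0 R)"
proof -
  interpret cring R by fact
  have ex: "\<And>U. U \<in> carrier (M0 R) \<Longrightarrow> \<exists>a\<in>carrier R. U = {[a]}" by (auto simp: M0_simps)
  show ?thesis
  proof (rule moduleI)
    show "cring R" by fact
    show "abelian_group (M0 R)"
    proof (rule abelian_groupI)
      fix x y assume "x \<in> carrier (M0 R)" "y \<in> carrier (M0 R)"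
      then show "x \<oplus>\<^bsub>M0 R\<^esub> y \<in> carrier (M0 R)" using ex by (auto simp: M0_simps)
    next
      show "\<zero>\<^bsub>M0 R\<^esub> \<in> carrier (M0 R)" by (auto simp: M0_simps)
    next
      fix x y z assume "x \<in> carrier (M0 R)" "y \<in> carrier (M0 R)" "z \<in> carrier (M0 R)"
      then show "x \<oplus>\<^bsub>M0 R\<^esub> y \<oplus>\<^bsub>M0 R\<^esub> z = x \<oplus>\<^bsub>M0 R\<^esub> (y \<oplus>\<^bsub>M0 R\<^esub> z)"
        using ex by (auto simp: M0_simps a_assoc)
    next
      fix x y assume "x \<in> carrier (M0 R)" "y \<in> carrier (M0 R)"
      then show "x \<oplus>\<^bsub>M0 R\<^esub> y = y \<oplus>\<^bsub>M0 R\<^esub> x" using ex by (auto simp: M0_simps a_comm)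
    next
      fix x assume "x \<in> carrier (M0 R)"
      then show "\<zero>\<^bsub>M0 R\<^esub> \<oplus>\<^bsub>M0 R\<^esub> x = x" using ex by (auto simp: M0_simps)
    next
      fix x assume "x \<in> carrier (M0 R)"
      then obtain a where a: "a \<in> carrier R" "x = {[a]}" using ex by blast
      then show "\<exists>y\<in>carrier (M0 R). y \<oplus>\<^bsub>M0 R\<^esub> x = \<zero>\<^bsub>M0 R\<^esub>"
        by (intro bexI[of _ "{[\<ominus>\<^bsub>R\<^esub> a]}"]) (auto simp: M0_simps l_neg)
    qed
  next
    fix a x assume "a \<in> carrier R" "x \<in> carrier (M0 R)"
    then show "a \<odot>\<^bsub>M0 R\<^esub> x \<in> carrier (M0 R)" using ex by (auto simp: M0_simps)
  next
    fix a b x assume "a \<in> carrier R" "b \<in> carrier R" "x \<in> carrier (M0 R)"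
    then show "(a \<oplus>\<^bsub>R\<^esub> b) \<odot>\<^bsub>M0 R\<^esub> x = a \<odot>\<^bsub>M0 R\<^esub> x \<oplus>\<^bsub>M0 R\<^esub> b \<odot>\<^bsub>M0 R\<^esub> x"
      using ex by (auto simp: M0_simps l_distr)
  next
    fix a x y assume "a \<in> carrier R" "x \<in> carrier (M0 R)" "y \<in> carrier (M0 R)"
    then show "a \<odot>\<^bsub>M0 R\<^esub> (x \<oplus>\<^bsub>M0 R\<^esub> y) = a \<odot>\<^bsub>M0 R\<^esub> x \<oplus>\<^bsub>M0 R\<^esub> a \<odot>\<^bsub>M0 R\<^esub> y"
      using ex by (auto simp: M0_simps r_distr)
  next
    fix a b x assume "a \<in> carrier R" "b \<in> carrier R" "x \<in> carrier (M0 R)"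
    then show "(a \<otimes>\<^bsub>R\<^esub> b) \<odot>\<^bsub>M0 R\<^esub> x = a \<odot>\<^bsub>M0 R\<^esub> (b \<odot>\<^bsub>M0 R\<^esub> x)"
      using ex by (auto simp: M0_simps m_assoc)
  next
    fix x assume "x \<in> carrier (M0 R)"
    then show "\<one>\<^bsub>R\<^esub> \<odot>\<^bsub>M0 R\<^esub> x = x" using ex by (auto simp: M0_simps)
  qed
qed

lemma M0_fin_gen:
  assumes "cring R" shows "fin_gen R (M0 R)"
proof -
  interpret cring R by fact
  have oc: "{[\<one>\<^bsub>R\<^esub>]} \<in> carrier (M0 R)" by (simp add: M0_simps)
  have "gen_sub R (M0 R) {{[\<one>\<^bsub>R\<^esub>]}} = carrier (M0 R)"
  proof
    show "gen_sub R (M0 R) {{[\<one>\<^bsub>R\<^esub>]}} \<subseteq> carrier (M0 R)" unfolding gen_sub_def by blast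
    show "carrier (M0 R) \<subseteq> gen_sub R (M0 R) {{[\<one>\<^bsub>R\<^esub>]}}"
    proof
      fix x assume x: "x \<in> carrier (M0 R)"
      then obtain a where a: "a \<in> carrier R" "x = {[a]}" by (auto simp: M0_simps)
      have "x = a \<odot>\<^bsub>M0 R\<^esub> {[\<one>\<^bsub>R\<^esub>]}" using a by (simp add: M0_simps)
      then have "x \<in> N" if "submodule N R (M0 R)" "{{[\<one>\<^bsub>R\<^esub>]}} \<subseteq> N" for N
        using submodule.smult_closed[OF that(1) a(1)] that(2) by auto
      then show "x \<in> gen_sub R (M0 R) {{[\<one>\<^bsub>R\<^esub>]}}" unfolding gen_sub_def using x by blast
    qed
  qed
  then show ?thesis unfolding fin_gen_def using oc by (intro exI[of _ "{{[\<one>\<^bsub>R\<^esub>]}}"]) auto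
qed

primrec cprod :: "('a, 'c) ring_scheme \<Rightarrow> (nat \<Rightarrow> 'a) \<Rightarrow> nat \<Rightarrow> 'a" where
  "cprod R c 0 = \<one>\<^bsub>R\<^esub>"
| "cprod R c (Suc j) = cprod R c j \<otimes>\<^bsub>R\<^esub> c j"


theorem proposition2p9:
  fixes R :: "'a ring"
  assumes "arithmetic R"
    and "compactin (zariski R) (Minspec R)"
    and "\<forall>M :: 'a std_module. module R M \<and> fin_gen R M \<longrightarrow> has_pcs_ic R M"
  shows "finite (Minspec R)"
proof (rule ccontr)
  assume inf: "infinite (Minspec R)"
  have cr: "cring R" using assms(1) unfolding arithmetic_def by blast
  interpret cring R by (rule cr)
  obtain f :: "nat \<Rightarrow> 'a set" where f: "inj f" "range f \<subseteq> Minspec R"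
    using infinite_countable_subset[OF inf] by blast
  have fp: "primeideal (f k) R" for k using f(2) minspec_prime by blast
  let ?M = "M0 R"
  have modM: "module R ?M" by (rule M0_module[OF cr])
  have "has_pcs_ic R ?M" using assms(3) modM M0_fin_gen[OF cr] by blast
  then obtain Ms :: "nat \<Rightarrow> 'a list set set" and n where
    Ms0: "Ms 0 = {\<zero>\<^bsub>?M\<^esub>}" and Msn: "Ms n = carrier ?M"
    and pure: "\<forall>i\<le>n. pure_sub R ?M (Ms i)"
    and steps: "\<forall>i<n. Ms i \<subset> Ms (Suc i) \<and>
        cyclic_mod R (quot_mod R (?M\<lparr>carrier := Ms (Suc i)\<rparr>) (Ms i)) \<and>
        indecomposable R (quot_mod R (?M\<lparr>carrier := Ms (Suc i)\<rparr>) (Ms i))"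
    unfolding has_pcs_ic_def by blast
  have subm: "submodule (Ms i) R ?M" if "i \<le> n" for i using pure that unfolding pure_sub_def by blast
  have MsC: "Ms i \<subseteq> carrier ?M" if "i \<le> n" for i
    using subgroup.subset[OF submodule.axioms(1)[OF subm[OF that]]] by simp
  have dich: "(\<forall>x\<in>Ms (Suc i). e \<odot>\<^bsub>?M\<^esub> x \<in> Ms i) \<or> (\<forall>x\<in>Ms (Suc i). (\<one>\<^bsub>R\<^esub> \<ominus>\<^bsub>R\<^esub> e) \<odot>\<^bsub>?M\<^esub> x \<in> Ms i)"
    if i: "i < n" and e: "e \<in> carrier R" "e \<otimes>\<^bsub>R\<^esub> e = e" for i e
  proof -
    have modi: "module R (?M\<lparr>carrier := Ms (Suc i)\<rparr>)"
      by (rule submodule.submodule_is_module[OF subm modM]) (use i in simp)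
    have modi2: "module R ((?M\<lparr>carrier := Ms (Suc i)\<rparr>)\<lparr>carrier := Ms i\<rparr>)"
      using submodule.submodule_is_module[OF subm[of i] modM] i by simp
    have subi: "submodule (Ms i) R (?M\<lparr>carrier := Ms (Suc i)\<rparr>)"
      by (rule module.module_incl_imp_submodule[OF modi _ modi2]) (use steps i in auto)
    have ind: "indecomposable R (quot_mod R (?M\<lparr>carrier := Ms (Suc i)\<rparr>) (Ms i))" using steps i by blast
    from dichotomy[OF modi subi ind e] show ?thesis by simp
  qed
  define good where "good k i \<longleftrightarrow> (\<exists>c\<in>carrier R. c \<notin> f k \<and> (\<forall>x\<in>Ms (Suc i). c \<odot>\<^bsub>?M\<^esub> x \<in> Ms i))" for k i
  have "\<exists>k\<le>n. \<forall>i<n. good k i"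
  proof (rule ccontr)
    assume "\<not> ?thesis"
    then have "\<forall>k\<in>{..n}. \<exists>i. i < n \<and> \<not> good k i" by auto
    then obtain g where g: "\<forall>k\<in>{..n}. g k < n \<and> \<not> good k (g k)" by metis
    have "g ` {..n} \<subseteq> {..<n}" using g by auto
    then have "card (g ` {..n}) \<le> n" using card_mono[of "{..<n}"] by fastforce
    then have "card (g ` {..n}) < card {..n}" by simp
    then have "\<not> inj_on g {..n}" by (rule pigeonhole)
    then obtain k1 k2 where k: "k1 \<le> n" "k2 \<le> n" "k1 \<noteq> k2" "g k1 = g k2"
      unfolding inj_on_def by auto
    have "f k1 \<noteq> f k2" using f(1) k(3) by (simp add: inj_eq)
    then obtain e where e: "e \<in> carrier R" "e \<otimes>\<^bsub>R\<^esub> e = e" "e \<in> f k2" "\<one>\<^bsub>R\<^esub> \<ominus>\<^bsub>R\<^esub> e \<in> f k1"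
      using sep[OF assms(1,2)] f(2) by blast
    have omc: "\<one>\<^bsub>R\<^esub> \<ominus>\<^bsub>R\<^esub> e \<in> carrier R" using e by simp
    have sum1: "e \<oplus>\<^bsub>R\<^esub> (\<one>\<^bsub>R\<^esub> \<ominus>\<^bsub>R\<^esub> e) = \<one>\<^bsub>R\<^esub>" using e(1) by algebra
    have ne1: "e \<notin> f k1"
    proof
      assume "e \<in> f k1"
      then have "e \<oplus>\<^bsub>R\<^esub> (\<one>\<^bsub>R\<^esub> \<ominus>\<^bsub>R\<^esub> e) \<in> f k1"
        using additive_subgroup.a_closed[OF ideal.axioms(1)[OF primeideal.axioms(1)[OF fp]]] e(4) by blast
      then show False using sum1 prime_one_notin[OF fp] by simp
    qed
    have ne2: "\<one>\<^bsub>R\<^esub> \<ominus>\<^bsub>R\<^esub> e \<notin> f k2"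
    proof
      assume "\<one>\<^bsub>R\<^esub> \<ominus>\<^bsub>R\<^esub> e \<in> f k2"
      then have "e \<oplus>\<^bsub>R\<^esub> (\<one>\<^bsub>R\<^esub> \<ominus>\<^bsub>R\<^esub> e) \<in> f k2"
        using additive_subgroup.a_closed[OF ideal.axioms(1)[OF primeideal.axioms(1)[OF fp]]] e(3) by blast
      then show False using sum1 prime_one_notin[OF fp] by simp
    qed
    have gi: "g k1 < n" using g k(1) by auto
    from dich[OF gi e(1,2)] show False
    proof
      assume "\<forall>x\<in>Ms (Suc (g k1)). e \<odot>\<^bsub>?M\<^esub> x \<in> Ms (g k1)"
      then have "good k1 (g k1)" unfolding good_def using e(1) ne1 by blast
      then show False using g k(1) by auto
    next
      assume "\<forall>x\<in>Ms (Suc (g k1)). (\<one>\<^bsub>R\<^esub> \<ominus>\<^bsub>R\<^esub> e) \<odot>\<^bsub>?M\<^esub> x \<in> Ms (g k1)"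
      then have "good k2 (g k2)" unfolding good_def using omc ne2 k(4) by auto
      then show False using g k(2) by auto
    qed
  qed
  then obtain k where k: "k \<le> n" "\<forall>i<n. good k i" by blast
  have "\<forall>i\<in>{..<n}. \<exists>c. c \<in> carrier R \<and> c \<notin> f k \<and> (\<forall>x\<in>Ms (Suc i). c \<odot>\<^bsub>?M\<^esub> x \<in> Ms i)"
    using k(2) unfolding good_def by auto
  then obtain ce where ce: "\<forall>i\<in>{..<n}. ce i \<in> carrier R \<and> ce i \<notin> f k \<and> (\<forall>x\<in>Ms (Suc i). ce i \<odot>\<^bsub>?M\<^esub> x \<in> Ms i)"
    by metis
  have main: "j \<le> n \<longrightarrow> cprod R ce j \<in> carrier R \<and> cprod R ce j \<notin> f k \<and> (\<forall>x\<in>Ms j. cprod R ce j \<odot>\<^bsub>?M\<^esub> x \<in> Ms 0)" for j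
  proof (induction j)
    case 0
    have "x \<in> Ms 0 \<Longrightarrow> \<one>\<^bsub>R\<^esub> \<odot>\<^bsub>?M\<^esub> x \<in> Ms 0" for x
      using module.smult_one[OF modM] MsC[of 0] by auto
    then show ?case using prime_one_notin[OF fp] by simp
  next
    case (Suc j)
    show ?case
    proof
      assume sj: "Suc j \<le> n"
      then have j: "j < n" by simp
      then have IH: "cprod R ce j \<in> carrier R" "cprod R ce j \<notin> f k" "\<forall>x\<in>Ms j. cprod R ce j \<odot>\<^bsub>?M\<^esub> x \<in> Ms 0"
        using Suc.IH by auto
      have cej: "ce j \<in> carrier R" "ce j \<notin> f k" "\<forall>x\<in>Ms (Suc j). ce j \<odot>\<^bsub>?M\<^esub> x \<in> Ms j" using ce j by auto
      have c1: "cprod R ce (Suc j) \<in> carrier R" using IH cej by simp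
      have c2: "cprod R ce (Suc j) \<notin> f k" using prime_notin_mult[OF fp IH(1) cej(1) IH(2) cej(2)] by simp
      have c3: "cprod R ce (Suc j) \<odot>\<^bsub>?M\<^esub> x \<in> Ms 0" if x: "x \<in> Ms (Suc j)" for x
      proof -
        have xc: "x \<in> carrier ?M" using MsC[OF sj] x by blast
        have "cprod R ce (Suc j) \<odot>\<^bsub>?M\<^esub> x = cprod R ce j \<odot>\<^bsub>?M\<^esub> (ce j \<odot>\<^bsub>?M\<^esub> x)"
          using module.smult_assoc1[OF modM IH(1) cej(1) xc] by simp
        also have "\<dots> \<in> Ms 0" using IH(3) cej(3) x by blast
        finally show ?thesis .
      qed
      show "cprod R ce (Suc j) \<in> carrier R \<and> cprod R ce (Suc j) \<notin> f k \<and> (\<forall>x\<in>Ms (Suc j). cprod R ce (Suc j) \<odot>\<^bsub>?M\<^esub> x \<in> Ms 0)"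
        using c1 c2 c3 by blast
    qed
  qed
  have cn: "cprod R ce n \<in> carrier R" "cprod R ce n \<notin> f k" "\<forall>x\<in>Ms n. cprod R ce n \<odot>\<^bsub>?M\<^esub> x \<in> Ms 0"
    using main[of n] by auto
  have "{[\<one>\<^bsub>R\<^esub>]} \<in> Ms n" using Msn by (simp add: M0_simps)
  then have "cprod R ce n \<odot>\<^bsub>?M\<^esub> {[\<one>\<^bsub>R\<^esub>]} \<in> Ms 0" using cn(3) by blast
  then have "{[cprod R ce n]} = {[\<zero>\<^bsub>R\<^esub>]}" using Ms0 cn(1) by (simp add: M0_simps)
  then have "cprod R ce n = \<zero>\<^bsub>R\<^esub>" by simp
  moreover have "\<zero>\<^bsub>R\<^esub> \<in> f k"
    using additive_subgroup.zero_closed[OF ideal.axioms(1)[OF primeideal.axioms(1)[OF fp]]] .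
  ultimately show False using cn(2) by simp
qed


end
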